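(* For real $\alpha>0$ and $\beta>0$ define $$f(\alpha,\beta)=\sum_{n=-\infty}^{\infty}\frac{\alpha(-1)^n}{\sqrt{\alpha^2n^2+\alpha\beta^2}\,\sinh\!\left(\pi\sqrt{\alpha^2n^2+\alpha\beta^2}\right)}.$$ Then $f(\alpha,\beta)=f(1/\alpha,\beta)$.
   Context: The series converges absolutely. *)

theory Defs
  imports "HOL-Analysis.Analysis"
begin

text \<open>The bilateral series f(alpha,beta), summed over all integers n
  (absolutely convergent, so the unordered sum infsum is the bilateral sum).\<close>
definition f :: "real \<Rightarrow> real \<Rightarrow> real" where
  "f \<alpha> \<beta> = (\<Sum>\<^sub>\<infinity>n::int.
      \<alpha> * (-1) powi n /
      (sqrt (\<alpha>^2 * (of_int n)^2 + \<alpha> * \<beta>^2) *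
       sinh (pi * sqrt (\<alpha>^2 * (of_int n)^2 + \<alpha> * \<beta>^2))))"

end

theory Submission
  imports Defs
begin
lemma cot_digamma:
  fixes z :: complex assumes z: "z \<notin> \<int>"
  shows "Digamma (1 - z) - Digamma z = of_real pi * cot (of_real pi * z)"
proof -
  have z1: "1 - z \<notin> \<int>" using z Ints_diff[of 1 "1-z"] by auto
  have nz: "z \<notin> \<int>\<^sub>\<le>\<^sub>0" "1 - z \<notin> \<int>\<^sub>\<le>\<^sub>0" using z z1 nonpos_Ints_subset_Ints by auto
  have s: "sin (of_real pi * z) \<noteq> 0" using z by (subst sin_eq_0) auto
  have D1: "((\<lambda>w. Gamma w * Gamma (1 - w)) has_field_derivative
     (Gamma z * Digamma z * Gamma (1 - z) - Gamma z * (Gamma (1 - z) * Digamma (1 - z)))) (at z)"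
    using nz by (auto intro!: derivative_eq_intros)
  have D2: "((\<lambda>w. of_real pi / sin (of_real pi * w)) has_field_derivative
     (- (of_real pi * (cos (of_real pi * z) * of_real pi)) / (sin (of_real pi * z))^2)) (at z)"
    using s by (auto intro!: derivative_eq_intros simp: power2_eq_square)
  have eqf: "(\<lambda>w::complex. Gamma w * Gamma (1 - w)) = (\<lambda>w. of_real pi / sin (of_real pi * w))"
    by (rule ext) (rule Gamma_reflection_complex)
  have E: "Gamma z * Digamma z * Gamma (1 - z) - Gamma z * (Gamma (1 - z) * Digamma (1 - z))
     = - (of_real pi * (cos (of_real pi * z) * of_real pi)) / (sin (of_real pi * z))^2"
    using DERIV_unique[OF D1 D2[folded eqf]] .
  have G: "Gamma z * Gamma (1 - z) = of_real pi / sin (of_real pi * z)"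
    by (rule Gamma_reflection_complex)
  have "Gamma z * Gamma (1 - z) * (Digamma z - Digamma (1 - z))
     = - (of_real pi * (cos (of_real pi * z) * of_real pi)) / (sin (of_real pi * z))^2"
    using E by (simp add: algebra_simps)
  hence "of_real pi / sin (of_real pi * z) * (Digamma z - Digamma (1 - z))
     = - (of_real pi * (cos (of_real pi * z) * of_real pi)) / (sin (of_real pi * z))^2"
    using G by simp
  hence X: "of_real pi / sin (of_real pi * z) * (Digamma z - Digamma (1 - z))
     = (of_real pi / sin (of_real pi * z)) * (- (of_real pi * cos (of_real pi * z)) / sin (of_real pi * z))"
    by (simp add: power2_eq_square)
  have pnz: "(of_real pi :: complex) \<noteq> 0" by simp
  have "of_real pi / sin (of_real pi * z) \<noteq> 0" using s pnz by simp
  with X have "Digamma z - Digamma (1 - z) = - (of_real pi * cos (of_real pi * z)) / sin (of_real pi * z)"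
    by (rule mult_left_cancel[THEN iffD1, rotated])
  thus ?thesis by (simp add: cot_def field_simps)
qed

lemma not_Int_facts:
  fixes z :: complex assumes z: "z \<notin> \<int>"
  shows "z + of_nat n \<noteq> 0" "z - of_nat n \<noteq> 0" "1 - z + of_nat n \<noteq> 0" "z \<noteq> 0"
proof -
  show "z + of_nat n \<noteq> 0"
  proof
    assume "z + of_nat n = 0" hence "z = - of_nat n" by (simp add: eq_neg_iff_add_eq_0)
    thus False using z by simp
  qed
  show "z - of_nat n \<noteq> 0" using z by auto
  show "1 - z + of_nat n \<noteq> 0"
  proof
    assume "1 - z + of_nat n = 0" hence "z = 1 + of_nat n" by (simp add: algebra_simps)
    thus False using z by simp
  qed
  show "z \<noteq> 0" using z by auto
qed

lemma cot_series:
  fixes z :: complex assumes z: "z \<notin> \<int>"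
  shows "(\<lambda>k. 2*z/(z^2 - (of_nat k + 1)^2)) sums (of_real pi * cot (of_real pi * z) - 1/z)"
proof -
  note nf = not_Int_facts[OF z]
  have z1: "1 - z \<notin> \<int>" using z Ints_diff[of 1 "1-z"] by auto
  note nf1 = not_Int_facts[OF z1]
  define a where "a w k = inverse (of_nat (Suc k)) - inverse (w + of_nat k)" for w :: complex and k
  have sa: "summable (a z)" "summable (a (1 - z))"
    unfolding a_def using summable_Digamma[OF nf(4)] summable_Digamma[OF nf1(4)] by auto
  have "(\<lambda>k. a (1 - z) k - a z k) sums (suminf (a (1 - z)) - suminf (a z))"
    using sa by (intro sums_diff summable_sums)
  also have "suminf (a (1 - z)) - suminf (a z) = Digamma (1 - z) - Digamma z"
    unfolding a_def Digamma_def by simp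
  also have "\<dots> = of_real pi * cot (of_real pi * z)" by (rule cot_digamma[OF z])
  finally have sd: "(\<lambda>k. inverse (z + of_nat k) - inverse (1 - z + of_nat k)) sums (of_real pi * cot (of_real pi * z))"
    by (simp add: a_def)
  have ceq: "2*z/(z^2 - (of_nat k + 1)^2) = inverse (z + of_nat (Suc k)) + inverse (z - of_nat (Suc k))" for k
  proof -
    have "z + of_nat (Suc k) \<noteq> 0" "z - of_nat (Suc k) \<noteq> 0" using nf by blast+
    moreover have "z^2 - (of_nat k + 1)^2 = (z + of_nat (Suc k)) * (z - of_nat (Suc k))"
      by (simp add: algebra_simps power2_eq_square)
    ultimately show ?thesis by (simp add: field_simps)
  qed
  have ps: "(\<Sum>k<N. 2*z/(z^2 - (of_nat k + 1)^2)) =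
      (\<Sum>k<N. inverse (z + of_nat k) - inverse (1 - z + of_nat k)) - 1/z + inverse (z + of_nat N)" for N
  proof (induction N)
    case 0 thus ?case using nf(4) by (simp add: divide_inverse)
  next
    case (Suc N)
    have e: "inverse (1 - z + of_nat N) = - inverse (z - of_nat (Suc N))"
    proof -
      have h: "1 - z + of_nat N = - (z - of_nat (Suc N))" by simp
      show ?thesis by (subst h) (rule inverse_minus_eq)
    qed
    show ?case using Suc by (simp add: ceq e)
  qed
  have "(\<lambda>N. (\<Sum>k<N. inverse (z + of_nat k) - inverse (1 - z + of_nat k)) - 1/z + inverse (z + of_nat N))
        \<longlonglongrightarrow> of_real pi * cot (of_real pi * z) - 1/z + 0"
    using sd unfolding sums_def
    by (intro tendsto_intros filterlim_compose[OF tendsto_inverse_0]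
              tendsto_add_filterlim_at_infinity[OF tendsto_const] tendsto_of_nat)
  thus ?thesis unfolding sums_def ps by simp
qed

lemma sin_i_real: "sin (\<i> * complex_of_real x) = \<i> * of_real (sinh x)"
  by (simp add: sin_i_times exp_of_real sinh_field_def exp_minus)

lemma cos_i_real: "cos (\<i> * complex_of_real x) = of_real (cosh x)"
  by (simp add: cos_i_times exp_of_real cosh_field_def exp_minus)

lemma coth_series:
  fixes t :: real assumes t: "t > 0"
  shows "(\<lambda>k. 2*t/(t^2 + (real k + 1)^2)) sums (pi * cosh (pi*t) / sinh (pi*t) - 1/t)"
proof -
  define z where "z = \<i> * complex_of_real t"
  have z: "z \<notin> \<int>" using t by (simp add: z_def complex_is_Int_iff)
  from sums_mult[OF cot_series[OF z], of "\<i>"]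
  have S: "(\<lambda>k. \<i> * (2*z/(z^2 - (of_nat k + 1)^2))) sums (\<i> * (of_real pi * cot (of_real pi * z) - 1/z))" .
  have e1: "\<i> * (2*z/(z^2 - (of_nat k + 1)^2)) = of_real (2*t/(t^2 + (real k + 1)^2))" for k
  proof -
    have "t^2 + (real k + 1)^2 > 0" using t by (intro add_pos_nonneg) auto
    hence nz: "complex_of_real t ^ 2 + (of_nat k + 1)^2 \<noteq> 0"
      by (metis (no_types, lifting) of_real_1 of_real_add of_real_eq_0_iff of_real_of_nat_eq of_real_power order_less_irrefl)
    have "z^2 - (of_nat k + 1)^2 = - (complex_of_real t ^ 2 + (of_nat k + 1)^2)"
      by (simp add: z_def power2_eq_square algebra_simps)
    moreover have B: "\<i> * (2*z) = - (2 * complex_of_real t)" by (simp add: z_def mult.left_commute)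
    moreover have "\<i> * (2*z/(- (complex_of_real t ^ 2 + (of_nat k + 1)^2))) = 2 * complex_of_real t / (complex_of_real t ^ 2 + (of_nat k + 1)^2)"
      by (simp only: times_divide_eq_right B minus_divide_divide)
    ultimately show ?thesis by simp
  qed
  have sh: "sinh (pi * t) \<noteq> 0" using t by simp
  have e2: "\<i> * (of_real pi * cot (of_real pi * z) - 1/z) = of_real (pi * cosh (pi*t) / sinh (pi*t) - 1/t)"
  proof -
    have pz: "of_real pi * z = \<i> * of_real (pi * t)" by (simp add: z_def mult.left_commute)
    have "cot (of_real pi * z) = of_real (cosh (pi*t)) / (\<i> * of_real (sinh (pi*t)))"
      unfolding cot_def pz sin_i_real cos_i_real ..
    thus ?thesis using t sh by (simp add: z_def field_simps)
  qed
  from S show ?thesis unfolding e1 e2 sums_of_real_iff .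
qed

lemma has_sum_diff':
  fixes f g :: "'a \<Rightarrow> real"
  assumes "(f has_sum a) A" "(g has_sum b) A"
  shows "((\<lambda>x. f x - g x) has_sum (a - b)) A"
proof -
  have "((\<lambda>x. - g x) has_sum (- b)) A" using assms(2) by (simp add: has_sum_uminus)
  from has_sum_add[OF assms(1) this] show ?thesis by simp
qed

lemma int_split_has_sum:
  fixes g :: "int \<Rightarrow> real"
  assumes "g 0 = a" "((\<lambda>k::nat. g (int k + 1)) has_sum b) UNIV" "((\<lambda>k::nat. g (- (int k + 1))) has_sum c) UNIV"
  shows "(g has_sum (a + b + c)) UNIV"
proof -
  have i1: "inj (\<lambda>k::nat. int k + 1)" by (auto simp: inj_def)
  have i2: "inj (\<lambda>k::nat. - (int k + 1))" by (auto simp: inj_def)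
  have hb: "(g has_sum b) (range (\<lambda>k::nat. int k + 1))"
    using has_sum_reindex[OF i1, of g b] assms(2) by (simp add: o_def)
  have hc: "(g has_sum c) (range (\<lambda>k::nat. - (int k + 1)))"
    using has_sum_reindex[OF i2, of g c] assms(3) by (simp add: o_def)
  have ha: "(g has_sum a) {0}" using assms(1) by (intro has_sum_finiteI) auto
  have d1: "{0} \<inter> range (\<lambda>k::nat. int k + 1) = {}" by auto
  have d2: "({0} \<union> range (\<lambda>k::nat. int k + 1)) \<inter> range (\<lambda>k::nat. - (int k + 1)) = {}" by auto
  have "(g has_sum (a + b + c)) ({0} \<union> range (\<lambda>k::nat. int k + 1) \<union> range (\<lambda>k::nat. - (int k + 1)))"
    by (intro has_sum_Un_disjoint[OF has_sum_Un_disjoint[OF ha hb d1] hc d2])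
  also have "{0} \<union> range (\<lambda>k::nat. int k + 1) \<union> range (\<lambda>k::nat. - (int k + 1)) = UNIV"
  proof -
    have "j \<in> {0} \<union> range (\<lambda>k::nat. int k + 1) \<union> range (\<lambda>k::nat. - (int k + 1))" for j :: int
    proof (cases "j > 0")
      case True hence "j = int (nat (j - 1)) + 1" by simp
      thus ?thesis by blast
    next
      case False
      show ?thesis
      proof (cases "j = 0")
        case False
        with \<open>\<not> j > 0\<close> have "j = - (int (nat (- j - 1)) + 1)" by simp
        thus ?thesis by blast
      qed simp
    qed
    thus ?thesis by blast
  qed
  finally show ?thesis .
qed

lemma inv_sq_has_sum:
  fixes t :: real assumes t: "t > 0"
  shows "((\<lambda>j::int. 1/(t^2 + (of_int j)^2)) has_sum (pi* cosh(pi*t)/(t* sinh(pi*t)))) UNIV"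
proof -
  have sh: "sinh (pi*t) > 0" using t by simp
  have "(\<lambda>k. (1/(2*t)) * (2*t/(t^2 + (real k + 1)^2))) sums ((1/(2*t)) * (pi * cosh (pi*t) / sinh (pi*t) - 1/t))"
    by (rule sums_mult[OF coth_series[OF t]])
  moreover have "(1/(2*t)) * (2*t/(t^2 + (real k + 1)^2)) = 1/(t^2 + (real k + 1)^2)" for k
    using t by simp
  ultimately have s: "(\<lambda>k. 1/(t^2 + (real k + 1)^2)) sums ((1/(2*t)) * (pi * cosh (pi*t) / sinh (pi*t) - 1/t))"
    by simp
  have hs: "((\<lambda>k::nat. 1/(t^2 + (real k + 1)^2)) has_sum ((1/(2*t)) * (pi * cosh (pi*t) / sinh (pi*t) - 1/t))) UNIV"
    by (rule sums_nonneg_imp_has_sum[OF s]) (simp add: add_nonneg_nonneg)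
  have "((\<lambda>j::int. 1/(t^2 + (of_int j)^2)) has_sum
     (1/t^2 + (1/(2*t)) * (pi * cosh (pi*t) / sinh (pi*t) - 1/t) + (1/(2*t)) * (pi * cosh (pi*t) / sinh (pi*t) - 1/t))) UNIV"
    by (rule int_split_has_sum) (use hs in \<open>simp_all add: power2_eq_square algebra_simps\<close>)
  also have "1/t^2 + (1/(2*t)) * (pi * cosh (pi*t) / sinh (pi*t) - 1/t) + (1/(2*t)) * (pi * cosh (pi*t) / sinh (pi*t) - 1/t)
     = pi* cosh(pi*t)/(t* sinh(pi*t))"
    using t sh by (simp add: field_simps power2_eq_square)
  finally show ?thesis .
qed

lemma coth_half_identity:
  fixes x :: real assumes "x > 0"
  shows "cosh (x/2) / sinh (x/2) - cosh x / sinh x = 1 / sinh x"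
proof -
  have s2: "sinh x = 2 * sinh (x/2) * cosh (x/2)" using sinh_double[of "x/2"] by simp
  have c2: "cosh x = cosh (x/2)^2 + sinh (x/2)^2" using cosh_double[of "x/2"] by simp
  have p: "cosh (x/2)^2 - sinh (x/2)^2 = 1" by (rule hyperbolic_pythagoras)
  have sp: "sinh (x/2) > 0" using assms by simp
  have cp: "cosh (x/2) > 0" by simp
  show ?thesis unfolding s2 c2 using sp cp p by (simp add: field_simps power2_eq_square)
qed

lemma alt_inv_sq_has_sum:
  fixes t :: real assumes t: "t > 0"
  shows "((\<lambda>j::int. (-1) powi j / (t^2 + (of_int j)^2)) has_sum (pi/(t* sinh(pi*t)))) UNIV"
proof -
  define h where "h j = 1/(t^2 + (of_int j)^2)" for j :: int
  have t2: "t/2 > 0" using t by simp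
  have A: "(h has_sum (pi* cosh(pi*t)/(t* sinh(pi*t)))) UNIV"
    unfolding h_def by (rule inv_sq_has_sum[OF t])
  have B0: "((\<lambda>j::int. 1/((t/2)^2 + (of_int j)^2)) has_sum (pi* cosh(pi*(t/2))/((t/2)* sinh(pi*(t/2))))) UNIV"
    by (rule inv_sq_has_sum[OF t2])
  have e: "1/((t/2)^2 + (of_int j)^2) = 4 * h (2*j)" for j
  proof -
    have "t^2 + (2 * of_int j)^2 > 0" using t by (intro add_pos_nonneg) auto
    thus ?thesis unfolding h_def by (simp add: field_simps power2_eq_square)
  qed
  have B1: "((\<lambda>j. 4 * h (2*j)) has_sum (pi* cosh(pi*(t/2))/((t/2)* sinh(pi*(t/2))))) UNIV"
    using B0 unfolding e .
  hence B2: "((\<lambda>j. h (2*j)) has_sum (pi* cosh(pi*(t/2))/((t/2)* sinh(pi*(t/2)))) / 4) UNIV"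
    by (subst (asm) has_sum_cmult_right_iff) auto
  have i2: "inj (\<lambda>j::int. 2*j)" by (auto simp: inj_def)
  have B3: "(h has_sum (pi* cosh(pi*(t/2))/((t/2)* sinh(pi*(t/2)))) / 4) (range (\<lambda>j::int. 2*j))"
    using has_sum_reindex[OF i2, of h] B2 by (simp add: o_def)
  have B4: "((\<lambda>j. if even j then h j else 0) has_sum (pi* cosh(pi*(t/2))/((t/2)* sinh(pi*(t/2)))) / 4) UNIV"
    using B3 by (subst has_sum_cong_neutral[where T = "range (\<lambda>j::int. 2*j)" and g = h]) (auto elim!: evenE)
  have C: "((\<lambda>j. 2 * (if even j then h j else 0) - h j) has_sum
      (2 * ((pi* cosh(pi*(t/2))/((t/2)* sinh(pi*(t/2)))) / 4) - pi* cosh(pi*t)/(t* sinh(pi*t)))) UNIV"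
    by (intro has_sum_diff' has_sum_cmult_right B4 A)
  have v: "2 * ((pi* cosh(pi*(t/2))/((t/2)* sinh(pi*(t/2)))) / 4) - pi* cosh(pi*t)/(t* sinh(pi*t)) = pi/(t* sinh(pi*t))"
  proof -
    have pt: "pi * t > 0" using t by simp
    have "2 * ((pi* cosh(pi*(t/2))/((t/2)* sinh(pi*(t/2)))) / 4) - pi* cosh(pi*t)/(t* sinh(pi*t))
        = (pi/t) * (cosh (pi*t/2) / sinh (pi*t/2) - cosh (pi*t) / sinh (pi*t))"
      using t by (simp add: field_simps)
    also have "\<dots> = pi/(t* sinh(pi*t))" using coth_half_identity[OF pt] by simp
    finally show ?thesis .
  qed
  have f: "2 * (if even j then h j else 0) - h j = (-1) powi j / (t^2 + (of_int j)^2)" for j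
    by (simp add: h_def power_int_minus_left)
  from C show ?thesis unfolding v f .
qed

lemma pair_split_has_sum:
  fixes g :: "int \<Rightarrow> real"
  assumes "(g has_sum S) UNIV"
  shows "((\<lambda>m. g (2*m) + g (2*m+1)) has_sum S) UNIV"
proof -
  have sg: "g summable_on UNIV" using assms by (auto simp: has_sum_iff)
  define Ev where "Ev = range (\<lambda>m::int. 2*m)"
  define Od where "Od = range (\<lambda>m::int. 2*m+1)"
  have i1: "inj (\<lambda>m::int. 2*m)" by (auto simp: inj_def)
  have i2: "inj (\<lambda>m::int. 2*m+1)" by (auto simp: inj_def)
  have se: "g summable_on Ev" by (rule summable_on_subset_banach[OF sg]) auto
  have so: "g summable_on Od" by (rule summable_on_subset_banach[OF sg]) auto
  have he: "(g has_sum infsum g Ev) Ev" using se by simp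
  have ho: "(g has_sum infsum g Od) Od" using so by simp
  have disj: "Ev \<inter> Od = {}" unfolding Ev_def Od_def by (auto, presburger)
  have un: "Ev \<union> Od = UNIV"
  proof -
    have "j \<in> Ev \<union> Od" for j :: int
    proof (cases "even j")
      case True then obtain m where "j = 2*m" by (auto elim: evenE)
      thus ?thesis unfolding Ev_def by blast
    next
      case False then obtain m where "j = 2*m+1" by (auto elim: oddE)
      thus ?thesis unfolding Od_def by blast
    qed
    thus ?thesis by blast
  qed
  have "(g has_sum (infsum g Ev + infsum g Od)) UNIV"
    using has_sum_Un_disjoint[OF he ho disj] un by simp
  hence S: "S = infsum g Ev + infsum g Od" using assms has_sum_unique by blast
  have he': "((\<lambda>m. g (2*m)) has_sum infsum g Ev) UNIV"
    using has_sum_reindex[OF i1, of g] he unfolding Ev_def by (simp add: o_def)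
  have ho': "((\<lambda>m. g (2*m+1)) has_sum infsum g Od) UNIV"
    using has_sum_reindex[OF i2, of g] ho unfolding Od_def by (simp add: o_def)
  from has_sum_add[OF he' ho'] show ?thesis unfolding S .
qed

definition blk :: "(int \<Rightarrow> int \<Rightarrow> real) \<Rightarrow> int \<Rightarrow> int \<Rightarrow> real" where
  "blk s m j = (s (2*m) (2*j) + s (2*m) (2*j+1)) + (s (2*m+1) (2*j) + s (2*m+1) (2*j+1))"

lemma iter_eq_block:
  fixes s :: "int \<Rightarrow> int \<Rightarrow> real"
  assumes row: "\<And>n. s n summable_on UNIV"
  assumes H: "(\<lambda>n. infsum (s n) UNIV) summable_on UNIV"
  shows "infsum (\<lambda>n. infsum (s n) UNIV) UNIV = infsum (\<lambda>m. infsum (\<lambda>j. blk s m j) UNIV) UNIV"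
proof -
  define R where "R n = infsum (s n) UNIV" for n
  have r: "((\<lambda>j. s n (2*j) + s n (2*j+1)) has_sum R n) UNIV" for n
    using pair_split_has_sum[of "s n"] row[of n] unfolding R_def by simp
  have b: "((\<lambda>j. blk s m j) has_sum (R (2*m) + R (2*m+1))) UNIV" for m
    unfolding blk_def by (intro has_sum_add r)
  have "((\<lambda>m. R (2*m) + R (2*m+1)) has_sum infsum R UNIV) UNIV"
    using pair_split_has_sum[of R] H unfolding R_def by simp
  hence "infsum (\<lambda>m. R (2*m) + R (2*m+1)) UNIV = infsum R UNIV" by (rule infsumI)
  moreover have "infsum (\<lambda>j. blk s m j) UNIV = R (2*m) + R (2*m+1)" for m
    using b by (rule infsumI)
  ultimately show ?thesis unfolding R_def by simp
qed

lemma iter_swap: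
  fixes s :: "int \<Rightarrow> int \<Rightarrow> real"
  assumes row: "\<And>n. s n summable_on UNIV"
  assumes col: "\<And>k. (\<lambda>n. s n k) summable_on UNIV"
  assumes H: "(\<lambda>n. infsum (s n) UNIV) summable_on UNIV"
  assumes V: "(\<lambda>k. infsum (\<lambda>n. s n k) UNIV) summable_on UNIV"
  assumes B: "(\<lambda>(m,j). blk s m j) summable_on UNIV"
  shows "infsum (\<lambda>n. infsum (s n) UNIV) UNIV = infsum (\<lambda>k. infsum (\<lambda>n. s n k) UNIV) UNIV"
proof -
  define st where "st k n = s n k" for k n
  have 1: "infsum (\<lambda>n. infsum (s n) UNIV) UNIV = infsum (\<lambda>m. infsum (\<lambda>j. blk s m j) UNIV) UNIV"
    by (rule iter_eq_block[OF row H])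
  have 2: "infsum (\<lambda>k. infsum (st k) UNIV) UNIV = infsum (\<lambda>j. infsum (\<lambda>m. blk st j m) UNIV) UNIV"
    unfolding st_def[abs_def] by (rule iter_eq_block) (use col V in simp_all)
  have bt: "blk st j m = blk s m j" for j m unfolding blk_def st_def by simp
  have B': "(\<lambda>(m,j). blk s m j) summable_on (UNIV \<times> UNIV)" using B by simp
  have 3: "infsum (\<lambda>m. infsum (\<lambda>j. blk s m j) UNIV) UNIV = infsum (\<lambda>j. infsum (\<lambda>m. blk s m j) UNIV) UNIV"
    by (rule infsum_swap_banach[OF B'])
  show ?thesis using 1 2 3 unfolding bt st_def by simp
qed

lemma blk_identity:
  fixes q1 q2 q3 q4 :: real
  assumes "q1 > 0" "q2 > 0" "q3 > 0" "q4 = q2 + q3 - q1" "q4 > 0"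
  shows "1/q1 - 1/q3 - 1/q2 + 1/q4 = (q2 - q1) * (q3 - q1) * (1/(q2*q3*q4) + 1/(q1*q2*q3))"
proof -
  have "q4 > 0" by fact
  show ?thesis using assms(1-3,5) by (simp add: field_simps) (simp add: assms(4) algebra_simps)
qed

lemma amgm_aux: fixes u v :: real
  shows "(4*u+1)*(4 * v + 1) \<le> 16*(1+u^2+v^2)"
proof -
  have "0 \<le> 8*(u-v)^2 + (2*u-1)^2 + (2 * v - 1)^2 + 4*u^2 + 4 * v^2" by simp
  thus ?thesis by (simp add: power2_eq_square algebra_simps)
qed

lemma cube_bound:
  fixes p q r D :: real
  assumes "D > 0" "p \<ge> D" "q \<ge> D" "r \<ge> D"
  shows "1/(p*q*r) \<le> 1/D^3"
proof -
  have "D*D \<le> p*q" using assms by (intro mult_mono) auto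
  hence "D*D*D \<le> p*q*r" using assms by (intro mult_mono) auto
  hence "D^3 \<le> p*q*r" by (simp add: power3_eq_cube)
  moreover have "D^3 > 0" using assms by simp
  moreover have "p*q*r > 0" using assms by simp
  ultimately show ?thesis by (intro divide_left_mono) auto
qed

lemma blk_bound_real:
  fixes a b c x y :: real
  assumes a: "a > 0" and b: "b > 0" and c: "c > 0"
  assumes hx: "x^2 \<le> (2*x+1)^2" and hy: "y^2 \<le> (2*y+1)^2"
  defines "d \<equiv> min a (min b c)"
  defines "Q1 \<equiv> a*(2*x)^2 + b*(2*y)^2 + c"
  defines "Q2 \<equiv> a*(2*x+1)^2 + b*(2*y)^2 + c"
  defines "Q3 \<equiv> a*(2*x)^2 + b*(2*y+1)^2 + c"
  defines "Q4 \<equiv> a*(2*x+1)^2 + b*(2*y+1)^2 + c"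
  shows "\<bar>1/Q1 - 1/Q3 - 1/Q2 + 1/Q4\<bar> \<le> (32*a*b/d^3) * (1/(1+x^2) * (1/(1+y^2)))"
proof -
  define R where "R = 1 + x^2 + y^2"
  have dpos: "d > 0" using a b c by (simp add: d_def)
  have da: "d \<le> a" "d \<le> b" "d \<le> c" by (simp_all add: d_def)
  have R1: "R \<ge> 1" by (simp add: R_def)
  define D where "D = d * R"
  have Dpos: "D > 0" using dpos R1 by (simp add: D_def)
  have low: "a*u + b * v + c \<ge> D" if "u \<ge> x^2" "v \<ge> y^2" for u v
  proof -
    have "a*u \<ge> d*x^2" using da that by (meson mult_mono zero_le_power2 order_trans a less_imp_le)
    moreover have "b * v \<ge> d*y^2" using da that by (meson mult_mono zero_le_power2 order_trans b less_imp_le)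
    ultimately show ?thesis using da unfolding D_def R_def by (simp add: algebra_simps)
  qed
  have x4: "(2*x)^2 \<ge> x^2" and y4: "(2*y)^2 \<ge> y^2" by (simp_all add: power2_eq_square)
  have q1: "Q1 \<ge> D" unfolding Q1_def by (rule low[OF x4 y4])
  have q2: "Q2 \<ge> D" unfolding Q2_def by (rule low[OF hx y4])
  have q3: "Q3 \<ge> D" unfolding Q3_def by (rule low[OF x4 hy])
  have q4: "Q4 \<ge> D" unfolding Q4_def by (rule low[OF hx hy])
  have q4e: "Q4 = Q2 + Q3 - Q1" unfolding Q1_def Q2_def Q3_def Q4_def by simp
  have A: "Q2 - Q1 = a*(4*x+1)" unfolding Q1_def Q2_def by (simp add: algebra_simps power2_eq_square)
  have K: "Q3 - Q1 = b*(4*y+1)" unfolding Q1_def Q3_def by (simp add: algebra_simps power2_eq_square)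
  have id: "1/Q1 - 1/Q3 - 1/Q2 + 1/Q4 = (Q2 - Q1) * (Q3 - Q1) * (1/(Q2*Q3*Q4) + 1/(Q1*Q2*Q3))"
    using q1 q2 q3 q4 q4e Dpos by (intro blk_identity) auto
  have t1: "1/(Q2*Q3*Q4) \<le> 1/D^3" using q2 q3 q4 Dpos by (intro cube_bound) auto
  have t2: "1/(Q1*Q2*Q3) \<le> 1/D^3" using q2 q3 q1 Dpos by (intro cube_bound) auto
  have t0: "0 \<le> 1/(Q2*Q3*Q4) + 1/(Q1*Q2*Q3)" using q1 q2 q3 q4 Dpos by simp
  have ax: "\<bar>4*x+1\<bar> \<le> 4*\<bar>x\<bar>+1" and ay: "\<bar>4*y+1\<bar> \<le> 4*\<bar>y\<bar>+1" by (simp_all add: abs_triangle_ineq[THEN order_trans])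
  have sqx: "(4*\<bar>x\<bar>+1)^2 \<le> 32*x^2+2"
  proof -
    have "0 \<le> (4*\<bar>x\<bar>-1)^2" by simp
    thus ?thesis by (simp add: power2_eq_square algebra_simps)
  qed
  have sqy: "(4*\<bar>y\<bar>+1)^2 \<le> 32*y^2+2"
  proof -
    have "0 \<le> (4*\<bar>y\<bar>-1)^2" by simp
    thus ?thesis by (simp add: power2_eq_square algebra_simps)
  qed
  have amgm: "(4*\<bar>x\<bar>+1)*(4*\<bar>y\<bar>+1) \<le> ((4*\<bar>x\<bar>+1)^2 + (4*\<bar>y\<bar>+1)^2)/2"
  proof -
    have "0 \<le> ((4*\<bar>x\<bar>+1) - (4*\<bar>y\<bar>+1))^2" by simp
    thus ?thesis by (simp add: power2_eq_square algebra_simps)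
  qed
  have pk: "\<bar>(Q2 - Q1) * (Q3 - Q1)\<bar> \<le> 16*a*b*R"
  proof -
    have "\<bar>(Q2 - Q1) * (Q3 - Q1)\<bar> = a*b*(\<bar>4*x+1\<bar>*\<bar>4*y+1\<bar>)" using a b by (simp add: A K abs_mult)
    also have "\<bar>4*x+1\<bar>*\<bar>4*y+1\<bar> \<le> (4*\<bar>x\<bar>+1)*(4*\<bar>y\<bar>+1)" using ax ay by (intro mult_mono) auto
    also have "\<dots> \<le> 16*R" using amgm_aux[of "\<bar>x\<bar>" "\<bar>y\<bar>"] unfolding R_def by simp
    finally show ?thesis using a b by (simp add: mult_left_mono algebra_simps)
  qed
  have "\<bar>1/Q1 - 1/Q3 - 1/Q2 + 1/Q4\<bar> = \<bar>(Q2 - Q1) * (Q3 - Q1)\<bar> * (1/(Q2*Q3*Q4) + 1/(Q1*Q2*Q3))"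
    unfolding id abs_mult using t0 by simp
  also have "\<dots> \<le> (16*a*b*R) * (2/D^3)"
    using pk t1 t2 t0 a b R1 by (intro mult_mono) auto
  also have "(16*a*b*R) * (2/D^3) = (32*a*b/d^3) * (1/R^2)"
    using dpos R1 unfolding D_def by (simp add: field_simps power2_eq_square power3_eq_cube)
  also have "\<dots> \<le> (32*a*b/d^3) * (1/(1+x^2) * (1/(1+y^2)))"
  proof (rule mult_left_mono)
    have hint: "0 \<le> x^2 + y^2 + (x^2)^2 + x^2*y^2 + (y^2)^2" by (intro add_nonneg_nonneg) auto
    have "(1+x^2)*(1+y^2) \<le> R^2" using hint unfolding R_def by (simp add: power2_eq_square algebra_simps)
    moreover have "(1+x^2)*(1+y^2) > 0" by (intro mult_pos_pos) (auto intro: add_pos_nonneg)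
    moreover have "R^2 > 0" using R1 by simp
    ultimately have "1/R^2 \<le> 1/((1+x^2)*(1+y^2))" by (intro divide_left_mono) auto
    thus "1/R^2 \<le> 1/(1+x^2) * (1/(1+y^2))" by simp
    show "0 \<le> 32*a*b/d^3" using a b dpos by simp
  qed
  finally show ?thesis .
qed

definition sq :: "real \<Rightarrow> real \<Rightarrow> real \<Rightarrow> int \<Rightarrow> int \<Rightarrow> real" where
  "sq a b c n k = (-1) powi n * (-1) powi k / (a*(of_int n)^2 + b*(of_int k)^2 + c)"

lemma abs_m1_powi [simp]: "\<bar>(-1::real) powi n\<bar> = 1"
  by (simp add: power_int_minus_left)

lemma dominated_summable:
  fixes g h :: "'a \<Rightarrow> real"
  assumes "\<And>x. \<bar>g x\<bar> \<le> h x" "h summable_on A"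
  shows "g summable_on A"
proof -
  have "(\<lambda>x. norm (g x)) summable_on A"
    by (rule summable_on_comparison_test[OF assms(2)]) (use assms(1) in auto)
  thus ?thesis by (subst summable_on_iff_abs_summable_on_real)
qed

lemma quad_summable:
  fixes p r :: real assumes p: "p > 0" and r: "r > 0"
  shows "(\<lambda>k::int. 1/(p*(of_int k)^2 + r)) summable_on UNIV"
proof -
  define t where "t = sqrt (r/p)"
  have t: "t > 0" using p r by (simp add: t_def)
  have t2: "t^2 = r/p" using p r by (simp add: t_def)
  have "(\<lambda>j::int. 1/(t^2 + (of_int j)^2)) summable_on UNIV"
    using inv_sq_has_sum[OF t] by (auto simp: has_sum_iff)
  hence "(\<lambda>j::int. (1/p) * (1/(t^2 + (of_int j)^2))) summable_on UNIV"
    by (rule summable_on_cmult_right)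
  moreover have "(1/p) * (1/(t^2 + (of_int j)^2)) = 1/(p*(of_int j)^2 + r)" for j :: int
    using p r unfolding t2 by (simp add: field_simps)
  ultimately show ?thesis by simp
qed

lemma sq_abs:
  assumes "a > 0" "b > 0" "c > 0"
  shows "\<bar>sq a b c n k\<bar> = 1/(a*(of_int n)^2 + b*(of_int k)^2 + c)"
proof -
  have "a*(of_int n)^2 + b*(of_int k)^2 + c > 0" using assms
    by (intro add_nonneg_pos add_nonneg_nonneg) auto
  thus ?thesis unfolding sq_def by (simp add: abs_mult)
qed

lemma int_sq_le: "(of_int m :: real)^2 \<le> (2 * of_int m + 1)^2"
proof (cases "m \<ge> 0")
  case True
  hence x: "(of_int m :: real) \<ge> 0" by simp
  have "(2 * of_int m + 1)^2 - (of_int m)^2 = (of_int m::real) * (3 * of_int m + 4) + 1"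
    by (simp add: power2_eq_square algebra_simps)
  moreover have "(of_int m::real) * (3 * of_int m + 4) + 1 \<ge> 0" using x by simp
  ultimately show ?thesis by (metis diff_ge_0_iff_ge)
next
  case False
  hence x: "(of_int m :: real) \<le> -1" by simp
  have "(2 * of_int m + 1)^2 - (of_int m)^2 = (3 * of_int m + 1) * (of_int m + (1::real))"
    by (simp add: power2_eq_square algebra_simps)
  moreover have "(3 * of_int m + 1) * (of_int m + (1::real)) \<ge> 0"
    using x by (intro mult_nonpos_nonpos) auto
  ultimately show ?thesis by (metis diff_ge_0_iff_ge)
qed

lemma prod_summable:
  "(\<lambda>(m::int, j::int). 1/(1+(of_int m)^2) * (1/(1+(of_int j)^2)) :: real) summable_on UNIV"
proof -
  define u where "u m = 1/(1+(of_int m)^2::real)" for m :: int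
  have us: "u summable_on UNIV"
    using quad_summable[of 1 1] unfolding u_def by (simp add: add.commute)
  define U where "U = infsum u UNIV"
  have hu: "(u has_sum U) UNIV" using us by (simp add: U_def)
  have "(\<lambda>(m,j). u m * u j) summable_on Sigma UNIV (\<lambda>_. UNIV)"
  proof (rule summable_on_SigmaI)
    show "((\<lambda>j. (\<lambda>(m,j). u m * u j) (m, j)) has_sum u m * U) UNIV" for m
      using has_sum_cmult_right[OF hu, of "u m"] by simp
    show "(\<lambda>m. u m * U) summable_on UNIV" using us by (rule summable_on_cmult_left)
    show "0 \<le> (\<lambda>(m,j). u m * u j) (m, j)" for m j by (simp add: u_def)
  qed
  thus ?thesis unfolding u_def by simp
qed

lemma blk_sq_summable:
  assumes a: "a > 0" and b: "b > 0" and c: "c > 0"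
  shows "(\<lambda>(m,j). blk (sq a b c) m j) summable_on UNIV"
proof -
  define d where "d = min a (min b c)"
  define K where "K = 32*a*b/d^3"
  have bnd: "\<bar>blk (sq a b c) m j\<bar> \<le> K * (1/(1+(of_int m)^2) * (1/(1+(of_int j)^2)))" for m j
  proof -
    define x where "x = (of_int m :: real)"
    define y where "y = (of_int j :: real)"
    have "blk (sq a b c) m j = 1/(a*(2*x)^2 + b*(2*y)^2 + c) - 1/(a*(2*x)^2 + b*(2*y+1)^2 + c)
        - 1/(a*(2*x+1)^2 + b*(2*y)^2 + c) + 1/(a*(2*x+1)^2 + b*(2*y+1)^2 + c)"
      unfolding blk_def sq_def x_def y_def by (simp add: power_int_minus_left)
    also have "\<bar>\<dots>\<bar> \<le> K * (1/(1+x^2) * (1/(1+y^2)))"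
      unfolding K_def d_def using int_sq_le[of m] int_sq_le[of j]
      by (intro blk_bound_real a b c) (simp_all add: x_def y_def)
    finally show ?thesis by (simp add: x_def y_def)
  qed
  have "(\<lambda>(m::int, j::int). K * (1/(1+(of_int m)^2) * (1/(1+(of_int j)^2)))) summable_on UNIV"
    using summable_on_cmult_right[OF prod_summable, of K] by (simp add: case_prod_unfold)
  thus ?thesis
  proof (rule dominated_summable[rotated])
    fix z :: "int \<times> int"
    obtain m j where z: "z = (m, j)" by (cases z)
    show "\<bar>(\<lambda>(m,j). blk (sq a b c) m j) z\<bar> \<le> (\<lambda>(m::int, j::int). K * (1/(1+(of_int m)^2) * (1/(1+(of_int j)^2)))) z"
      unfolding z using bnd[of m j] by simp
  qed
qed

lemma sinh_ge_self: "(x::real) \<ge> 0 \<Longrightarrow> x \<le> sinh x"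
  using real_le_x_sinh[of x] by (simp add: sinh_field_def exp_minus)

lemma inv_sinh_bound:
  fixes Y :: real assumes Y: "Y > 0"
  shows "\<bar>pi/(Y * sinh (pi*Y))\<bar> \<le> 1/Y^2"
proof -
  have s: "pi*Y \<le> sinh (pi*Y)" using Y by (intro sinh_ge_self) simp
  have p: "pi*Y > 0" using Y by simp
  have "Y*(pi*Y) \<le> Y * sinh (pi*Y)" using s Y by (intro mult_left_mono) auto
  moreover have "Y*(pi*Y) > 0" using Y p by simp
  ultimately have "pi/(Y * sinh (pi*Y)) \<le> pi/(Y*(pi*Y))" by (intro divide_left_mono) auto
  also have "\<dots> = 1/Y^2" by (simp add: power2_eq_square)
  finally show ?thesis using Y p by (simp add: abs_of_pos)
qed

theorem mainTheorem1:
  fixes \<alpha> \<beta> :: real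
  assumes "\<alpha> > 0" and "\<beta> > 0"
  shows "f \<alpha> \<beta> = f (1 / \<alpha>) \<beta>"
proof -
  note al = assms(1) and be = assms(2)
  define a where "a = \<alpha>^2"
  define c where "c = \<alpha>*\<beta>^2"
  have a: "a > 0" using al by (simp add: a_def)
  have c: "c > 0" using al be by (simp add: c_def)
  define s where "s = sq a 1 c"
  define Y where "Y n = sqrt (a*(of_int n)^2 + c)" for n :: int
  define Z where "Z n = sqrt (((of_int n)^2 + c)/a)" for n :: int
  have qpos: "a*(of_int n)^2 + c > 0" for n :: int using a c by (intro add_nonneg_pos) auto
  have qpos': "((of_int n)^2 + c)/a > 0" for n :: int using a c by (intro divide_pos_pos add_nonneg_pos) auto
  have Ypos: "Y n > 0" for n unfolding Y_def using qpos by simp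
  have Y2: "(Y n)^2 = a*(of_int n)^2 + c" for n unfolding Y_def using qpos[of n] by simp
  have Zpos: "Z n > 0" for n unfolding Z_def using qpos' by simp
  have Z2: "(Z n)^2 = ((of_int n)^2 + c)/a" for n unfolding Z_def using qpos'[of n] by simp
  define RV where "RV n = (-1) powi n * (pi/(Y n * sinh (pi * Y n)))" for n
  define CV where "CV n = (-1) powi n * (1/a) * (pi/(Z n * sinh (pi * Z n)))" for n
  have hR: "(s n has_sum RV n) UNIV" for n
  proof -
    have "((\<lambda>k. (-1) powi n * ((-1) powi k / ((Y n)^2 + (of_int k)^2))) has_sum RV n) UNIV"
      unfolding RV_def by (intro has_sum_cmult_right alt_inv_sq_has_sum Ypos)
    moreover have "(-1) powi n * ((-1) powi k / ((Y n)^2 + (of_int k)^2)) = s n k" for k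
      unfolding s_def sq_def Y2 by (simp add: add_ac)
    ultimately show ?thesis by simp
  qed
  have hC: "((\<lambda>k. s k n) has_sum CV n) UNIV" for n
  proof -
    have "((\<lambda>k. ((-1) powi n * (1/a)) * ((-1) powi k / ((Z n)^2 + (of_int k)^2))) has_sum CV n) UNIV"
      unfolding CV_def by (intro has_sum_cmult_right alt_inv_sq_has_sum Zpos)
    moreover have "((-1) powi n * (1/a)) * ((-1) powi k / ((Z n)^2 + (of_int k)^2)) = s k n" for k
    proof -
      have "(Z n)^2 + (of_int k)^2 = (a*(of_int k)^2 + 1*(of_int n)^2 + c)/a"
        unfolding Z2 using a by (simp add: field_simps)
      moreover have "a*(of_int k)^2 + 1*(of_int n)^2 + c > 0" using a c by (intro add_nonneg_pos add_nonneg_nonneg) auto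
      ultimately show ?thesis unfolding s_def sq_def using a by (simp add: field_simps)
    qed
    ultimately show ?thesis by simp
  qed
  have row: "s n summable_on UNIV" for n
  proof (rule dominated_summable[OF _ quad_summable[of 1 c]])
    fix k
    have "a*(of_int n)^2 + 1*(of_int k)^2 + c \<ge> 1*(of_int k)^2 + c" using a by simp
    moreover have "1*(of_int k)^2 + c > 0" using c by (intro add_nonneg_pos) auto
    ultimately show "\<bar>s n k\<bar> \<le> 1/(1*(of_int k)^2 + c)"
      unfolding s_def using sq_abs[OF a _ c, of 1 n k] by (simp add: frac_le)
  qed (use c in auto)
  have col: "(\<lambda>n. s n k) summable_on UNIV" for k
  proof (rule dominated_summable[OF _ quad_summable[OF a c]])
    fix n
    have "a*(of_int n)^2 + 1*(of_int k)^2 + c \<ge> a*(of_int n)^2 + c" by simp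
    moreover have "a*(of_int n)^2 + c > 0" by (rule qpos)
    ultimately show "\<bar>s n k\<bar> \<le> 1/(a*(of_int n)^2 + c)"
      unfolding s_def using sq_abs[OF a _ c, of 1 n k] by (simp add: frac_le)
  qed
  have H: "(\<lambda>n. infsum (s n) UNIV) summable_on UNIV"
  proof (rule dominated_summable[OF _ quad_summable[OF a c]])
    fix n
    have "infsum (s n) UNIV = RV n" using hR[of n] by (rule infsumI)
    moreover have "\<bar>RV n\<bar> \<le> 1/(Y n)^2" unfolding RV_def
      using inv_sinh_bound[OF Ypos[of n]] by (simp add: abs_mult)
    ultimately show "\<bar>infsum (s n) UNIV\<bar> \<le> 1/(a*(of_int n)^2 + c)" by (simp add: Y2)
  qed
  have V: "(\<lambda>n. infsum (\<lambda>k. s k n) UNIV) summable_on UNIV"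
  proof (rule dominated_summable[OF _ quad_summable[of 1 c]])
    fix n
    have "infsum (\<lambda>k. s k n) UNIV = CV n" using hC[of n] by (rule infsumI)
    moreover have "\<bar>CV n\<bar> \<le> (1/a) * (1/(Z n)^2)"
    proof -
      have "\<bar>CV n\<bar> = (1/a) * \<bar>pi/(Z n * sinh (pi * Z n))\<bar>" unfolding CV_def using a
        by (simp only: abs_mult abs_m1_powi) simp
      also have "\<dots> \<le> (1/a) * (1/(Z n)^2)" using inv_sinh_bound[OF Zpos[of n]] a by (intro mult_left_mono) auto
      finally show ?thesis .
    qed
    moreover have "(1/a) * (1/(Z n)^2) = 1/(1*(of_int n)^2 + c)"
      unfolding Z2 using a qpos'[of n] by (simp add: field_simps)
    ultimately show "\<bar>infsum (\<lambda>k. s k n) UNIV\<bar> \<le> 1/(1*(of_int n)^2 + c)" by simp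
  qed (use c in auto)
  have B: "(\<lambda>(m,j). blk s m j) summable_on UNIV"
    unfolding s_def by (rule blk_sq_summable[OF a _ c]) simp
  have swap: "infsum (\<lambda>n. infsum (s n) UNIV) UNIV = infsum (\<lambda>n. infsum (\<lambda>k. s k n) UNIV) UNIV"
    by (rule iter_swap[OF row col H V B])
  have f1: "f \<alpha> \<beta> = infsum (\<lambda>n. (\<alpha>/pi) * infsum (s n) UNIV) UNIV"
    unfolding f_def
  proof (rule infsum_cong)
    fix n :: int
    have e: "sqrt (\<alpha>^2 * (of_int n)^2 + \<alpha> * \<beta>^2) = Y n" unfolding Y_def a_def c_def ..
    have "infsum (s n) UNIV = RV n" using hR[of n] by (rule infsumI)
    thus "\<alpha> * (-1) powi n / (sqrt (\<alpha>^2 * (of_int n)^2 + \<alpha> * \<beta>^2) * sinh (pi * sqrt (\<alpha>^2 * (of_int n)^2 + \<alpha> * \<beta>^2)))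
        = (\<alpha>/pi) * infsum (s n) UNIV"
      unfolding e RV_def by simp
  qed
  have f2: "f (1/\<alpha>) \<beta> = infsum (\<lambda>n. (\<alpha>/pi) * infsum (\<lambda>k. s k n) UNIV) UNIV"
    unfolding f_def
  proof (rule infsum_cong)
    fix n :: int
    have "(1/\<alpha>)^2 * (of_int n)^2 + (1/\<alpha>) * \<beta>^2 = ((of_int n)^2 + c)/a"
      unfolding a_def c_def using al by (simp add: field_simps power2_eq_square)
    hence e: "sqrt ((1/\<alpha>)^2 * (of_int n)^2 + (1/\<alpha>) * \<beta>^2) = Z n" unfolding Z_def by simp
    have "infsum (\<lambda>k. s k n) UNIV = CV n" using hC[of n] by (rule infsumI)
    thus "1/\<alpha> * (-1) powi n / (sqrt ((1/\<alpha>)^2 * (of_int n)^2 + 1/\<alpha> * \<beta>^2) * sinh (pi * sqrt ((1/\<alpha>)^2 * (of_int n)^2 + 1/\<alpha> * \<beta>^2)))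
        = (\<alpha>/pi) * infsum (\<lambda>k. s k n) UNIV"
      unfolding e CV_def a_def using al by (simp add: power2_eq_square field_simps)
  qed
  show ?thesis unfolding f1 f2 infsum_cmult_right' swap ..
qed

end
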